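(* Let $p\ge1$ and $n>p$ be integers, and let $\Lambda\in\mathbb R$. Let $z\in C^{2n}[-1,1]$ be a real even function such that: - $L^{2n}(\Lambda)z=0$ on $[-1,1]$, and - $z^{(j)}(\pm1)=0$ for $j=0,\dots,n-1$. Then $c:=L^{2n-2}(\Lambda)z$ is a constant function on $[-1,1]$. If $c=0$, then $z\equiv0$.
   Context: For an integer $k\ge p$ and real $\Lambda$, the differential operator $L^{2k}(\Lambda)$ on $[-1,1]$ is $$L^{2k}(\Lambda)=(-1)^k\frac{d^{2k}}{dx^{2k}}-\Lambda(-1)^{k-p}\frac{d^{2k-2p}}{dx^{2k-2p}}.$$ The constant $c$ is called the "stone" of $z$. *)

theory Defs
  imports "HOL-Analysis.Analysis"
begin

text \<open>Derivatives of a C^{2n} function on [-1,1] are represented by a family D, with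
  D j the j-th derivative (one-sided at the endpoints).\<close>

definition Lop :: "nat \<Rightarrow> nat \<Rightarrow> real \<Rightarrow> (nat \<Rightarrow> real \<Rightarrow> real) \<Rightarrow> real \<Rightarrow> real" where
  "Lop p k \<Lambda> D x = (-1) ^ k * D (2 * k) x - \<Lambda> * (-1) ^ (k - p) * D (2 * k - 2 * p) x"

end

theory Submission
  imports Defs
begin

lemma ftc_zero:
  fixes f f' :: "real \<Rightarrow> real"
  assumes "\<forall>x\<in>{-1..1}. (f has_real_derivative f' x) (at x within {-1..1})"
    and "f (-1) = 0" and "f 1 = 0"
  shows "(f' has_integral 0) {-1..1}"
proof -
  have "(f' has_integral f 1 - f (-1)) {-1..1}"
    by (rule fundamental_theorem_of_calculus)
       (use assms in \<open>auto simp: has_real_derivative_iff_has_vector_derivative[symmetric]\<close>)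
  then show ?thesis using assms by simp
qed

lemma ibp_iter:
  fixes F G :: "nat \<Rightarrow> real \<Rightarrow> real"
  assumes "\<forall>i<k. \<forall>x\<in>{-1..1}. (F i has_real_derivative F (Suc i) x) (at x within {-1..1})"
    and "\<forall>i<k. \<forall>x\<in>{-1..1}. (G i has_real_derivative G (Suc i) x) (at x within {-1..1})"
    and "\<forall>i\<le>k. continuous_on {-1..1} (F i)"
    and "\<forall>i\<le>k. continuous_on {-1..1} (G i)"
    and "\<forall>i<k. F i (-1) = 0 \<and> F i 1 = 0"
  shows "integral {-1..1} (\<lambda>x. F 0 x * G k x) = (-1)^k * integral {-1..1} (\<lambda>x. F k x * G 0 x)"
  using assms
proof (induction k arbitrary: F)
  case 0
  then show ?case by simp
next
  case (Suc k)
  have IH: "integral {-1..1} (\<lambda>x. F (Suc 0) x * G k x) = (-1)^k * integral {-1..1} (\<lambda>x. F (Suc k) x * G 0 x)"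
    using Suc.IH[of "\<lambda>i. F (Suc i)"] Suc.prems by auto
  have d: "\<forall>x\<in>{-1..1}. ((\<lambda>x. F 0 x * G k x) has_real_derivative (F 1 x * G k x + F 0 x * G (Suc k) x)) (at x within {-1..1})"
    using Suc.prems(1,2) by (auto intro!: derivative_eq_intros)
  have z: "((\<lambda>x. F 1 x * G k x + F 0 x * G (Suc k) x) has_integral 0) {-1..1}"
    by (rule ftc_zero[OF d]) (use Suc.prems(5) in auto)
  have c1: "continuous_on {-1..1} (\<lambda>x. F 1 x * G k x)"
    using Suc.prems(3,4) by (auto intro!: continuous_intros)
  have i1: "((\<lambda>x. F 1 x * G k x) has_integral integral {-1..1} (\<lambda>x. F 1 x * G k x)) {-1..1}"
    using integrable_continuous_real[OF c1] by (simp add: has_integral_integral)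
  have "((\<lambda>x. (F 1 x * G k x + F 0 x * G (Suc k) x) - F 1 x * G k x) has_integral 0 - integral {-1..1} (\<lambda>x. F 1 x * G k x)) {-1..1}"
    by (rule has_integral_diff[OF z i1])
  then have "integral {-1..1} (\<lambda>x. F 0 x * G (Suc k) x) = - integral {-1..1} (\<lambda>x. F 1 x * G k x)"
    by (simp add: integral_unique)
  then show ?case using IH by simp
qed

lemma energy:
  fixes D :: "nat \<Rightarrow> real \<Rightarrow> real"
  assumes H: "\<forall>j<N. \<forall>x\<in>{-1..1}. (D j has_real_derivative D (Suc j) x) (at x within {-1..1})"
    and C: "\<forall>j\<le>N. continuous_on {-1..1} (D j)"
    and B: "\<forall>j<K. D j (-1) = 0 \<and> D j 1 = 0"
    and k: "2 * k \<le> N" "k \<le> K"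
  shows "integral {-1..1} (\<lambda>x. D 0 x * D (2 * k) x) = (-1)^k * integral {-1..1} (\<lambda>x. D k x * D k x)"
proof -
  have "integral {-1..1} (\<lambda>x. D 0 x * (\<lambda>i. D (k + i)) k x) = (-1)^k * integral {-1..1} (\<lambda>x. D k x * (\<lambda>i. D (k + i)) 0 x)"
    by (rule ibp_iter) (use H C B k in auto)
  then show ?thesis by (simp add: mult_2)
qed

lemma pohozaev:
  fixes D :: "nat \<Rightarrow> real \<Rightarrow> real"
  assumes H: "\<forall>j<N. \<forall>x\<in>{-1..1}. (D j has_real_derivative D (Suc j) x) (at x within {-1..1})"
    and C: "\<forall>j\<le>N. continuous_on {-1..1} (D j)"
    and B: "\<forall>j<K. D j (-1) = 0 \<and> D j 1 = 0"
    and k: "2 * k \<le> N" "k < K" "k < N"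
  shows "integral {-1..1} (\<lambda>x. x * D 1 x * D (2 * k) x) = (-1)^k * (real k - 1/2) * integral {-1..1} (\<lambda>x. D k x * D k x)"
proof -
  define F where "F i x = x * D (Suc i) x + real i * D i x" for i x
  have FH: "\<forall>i<k. \<forall>x\<in>{-1..1}. (F i has_real_derivative F (Suc i) x) (at x within {-1..1})"
  proof (intro allI impI ballI)
    fix i x assume i: "i < k" and x: "x \<in> {-1..1::real}"
    have d1: "(D (Suc i) has_real_derivative D (Suc (Suc i)) x) (at x within {-1..1})"
      using H i k x by auto
    have d2: "(D i has_real_derivative D (Suc i) x) (at x within {-1..1})"
      using H i k x by auto
    have "((\<lambda>x. x * D (Suc i) x + real i * D i x) has_real_derivative
       (1 * D (Suc i) x + x * D (Suc (Suc i)) x + real i * D (Suc i) x)) (at x within {-1..1})"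
      using d1 d2 by (auto intro!: derivative_eq_intros)
    moreover have "1 * D (Suc i) x + x * D (Suc (Suc i)) x + real i * D (Suc i) x = F (Suc i) x"
      by (simp add: F_def algebra_simps)
    ultimately show "(F i has_real_derivative F (Suc i) x) (at x within {-1..1})"
      unfolding F_def[abs_def] by (metis (no_types, lifting))
  qed
  have FC: "\<forall>i\<le>k. continuous_on {-1..1} (F i)"
  proof (intro allI impI)
    fix i assume "i \<le> k"
    then have "continuous_on {-1..1} (D (Suc i))" "continuous_on {-1..1} (D i)" using C k by auto
    then show "continuous_on {-1..1} (F i)" unfolding F_def[abs_def] by (auto intro!: continuous_intros)
  qed
  have FB: "\<forall>i<k. F i (-1) = 0 \<and> F i 1 = 0"
    using B k by (auto simp: F_def)
  have "integral {-1..1} (\<lambda>x. F 0 x * (\<lambda>i. D (k + i)) k x) = (-1)^k * integral {-1..1} (\<lambda>x. F k x * (\<lambda>i. D (k + i)) 0 x)"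
    by (rule ibp_iter[OF FH _ FC _ FB]) (use H C k in auto)
  then have e1: "integral {-1..1} (\<lambda>x. x * D 1 x * D (2 * k) x) = (-1)^k * integral {-1..1} (\<lambda>x. F k x * D k x)"
    by (simp add: F_def mult_2)
  have ck: "continuous_on {-1..1} (D k)" "continuous_on {-1..1} (D (Suc k))" using C k by auto
  have d: "\<forall>x\<in>{-1..1}. ((\<lambda>x. x * (D k x * D k x)) has_real_derivative
      (D k x * D k x + 2 * (x * D (Suc k) x * D k x))) (at x within {-1..1})"
  proof
    fix x :: real assume x: "x \<in> {-1..1}"
    have dk: "(D k has_real_derivative D (Suc k) x) (at x within {-1..1})" using H k x by auto
    have "((\<lambda>x. x * (D k x * D k x)) has_real_derivative
      (1 * (D k x * D k x) + x * (D (Suc k) x * D k x + D k x * D (Suc k) x))) (at x within {-1..1})"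
      using dk by (auto intro!: derivative_eq_intros)
    then show "((\<lambda>x. x * (D k x * D k x)) has_real_derivative
      (D k x * D k x + 2 * (x * D (Suc k) x * D k x))) (at x within {-1..1})"
      by (simp add: algebra_simps)
  qed
  have z: "((\<lambda>x. D k x * D k x + 2 * (x * D (Suc k) x * D k x)) has_integral 0) {-1..1}"
    by (rule ftc_zero[OF d]) (use B k in auto)
  have int1: "(\<lambda>x. D k x * D k x) integrable_on {-1..1}"
    by (rule integrable_continuous_real) (use ck in \<open>auto intro!: continuous_intros\<close>)
  have int2: "(\<lambda>x. x * D (Suc k) x * D k x) integrable_on {-1..1}"
    by (rule integrable_continuous_real) (use ck in \<open>auto intro!: continuous_intros\<close>)
  have "integral {-1..1} (\<lambda>x. D k x * D k x + 2 * (x * D (Suc k) x * D k x)) = 0"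
    using z by (rule integral_unique)
  then have s1: "integral {-1..1} (\<lambda>x. D k x * D k x) + 2 * integral {-1..1} (\<lambda>x. x * D (Suc k) x * D k x) = 0"
    using int1 int2 by (simp add: integral_add integral_mult_right)
  have "integral {-1..1} (\<lambda>x. F k x * D k x) = integral {-1..1} (\<lambda>x. x * D (Suc k) x * D k x + real k * (D k x * D k x))"
    by (rule integral_cong) (simp add: F_def algebra_simps)
  also have "\<dots> = integral {-1..1} (\<lambda>x. x * D (Suc k) x * D k x) + real k * integral {-1..1} (\<lambda>x. D k x * D k x)"
    by (subst integral_add) (use ck in \<open>auto intro!: integrable_continuous_real continuous_intros\<close>)
  also have "\<dots> = (real k - 1/2) * integral {-1..1} (\<lambda>x. D k x * D k x)"
    using s1 by (simp add: algebra_simps)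
  finally show ?thesis using e1 by simp
qed


lemma deriv_transform_I:
  "x \<in> S \<Longrightarrow> (\<And>y. y \<in> S \<Longrightarrow> f y = g y) \<Longrightarrow> (f has_field_derivative d) (at x within S)
   \<Longrightarrow> (g has_field_derivative d) (at x within S)"
  unfolding has_field_derivative_def by (rule has_derivative_transform) auto

lemma parity:
  fixes D :: "nat \<Rightarrow> real \<Rightarrow> real"
  assumes H: "\<forall>j<N. \<forall>x\<in>{-1..1}. (D j has_real_derivative D (Suc j) x) (at x within {-1..1})"
    and E: "\<forall>x \<in> {-1..1}. D 0 (- x) = D 0 x"
  shows "j \<le> N \<Longrightarrow> \<forall>x\<in>{-1..1}. D j (-x) = (-1)^j * D j x"
proof (induction j)
  case 0
  then show ?case using E by simp
next
  case (Suc j)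
  then have IH: "\<forall>x\<in>{-1..1}. D j (-x) = (-1)^j * D j x" by simp
  show ?case
  proof
    fix x :: real assume x: "x \<in> {-1..1}"
    have mx: "-x \<in> {-1..1}" using x by auto
    have img: "uminus ` {-1..1::real} = {-1..1}" by auto
    have d1: "(D j has_real_derivative D (Suc j) (-x)) (at (-x) within uminus ` {-1..1})"
      using H Suc.prems mx img by auto
    have d2: "(uminus has_real_derivative -1) (at x within {-1..1})"
      by (auto intro!: derivative_eq_intros)
    have "(D j \<circ> uminus has_real_derivative D (Suc j) (-x) * -1) (at x within {-1..1})"
      by (rule DERIV_image_chain[OF d1 d2])
    then have ch: "(D j \<circ> uminus has_real_derivative - D (Suc j) (-x)) (at x within {-1..1})" by simp
    have a: "((\<lambda>y. (-1)^j * D j y) has_real_derivative - D (Suc j) (-x)) (at x within {-1..1})"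
      by (rule deriv_transform_I[OF x _ ch]) (use IH in auto)
    have b: "((\<lambda>y. (-1)^j * D j y) has_real_derivative (-1)^j * D (Suc j) x) (at x within {-1..1})"
      using H Suc.prems x by (auto intro!: derivative_eq_intros)
    have "- D (Suc j) (-x) = (-1)^j * D (Suc j) x"
    proof (rule vector_derivative_unique_within_closed_interval[of "-1" 1 x "\<lambda>y. (-1)^j * D j y"])
      show "(-1::real) < 1" by simp
      show "x \<in> cbox (-1) 1" using x by simp
      show "((\<lambda>y. (-1)^j * D j y) has_vector_derivative - D (Suc j) (-x)) (at x within cbox (-1) 1)"
        using a unfolding has_real_derivative_iff_has_vector_derivative by simp
      show "((\<lambda>y. (-1)^j * D j y) has_vector_derivative (-1)^j * D (Suc j) x) (at x within cbox (-1) 1)"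
        using b unfolding has_real_derivative_iff_has_vector_derivative by simp
    qed
    then show "D (Suc j) (- x) = (-1) ^ Suc j * D (Suc j) x" by simp
  qed
qed

theorem mainTheorem3:
  fixes p n :: nat and \<Lambda> :: real and z :: "real \<Rightarrow> real" and D :: "nat \<Rightarrow> real \<Rightarrow> real"
  assumes "p \<ge> 1" and "n > p"
    and "D 0 = z"
    and "\<forall>j < 2 * n. \<forall>x \<in> {-1..1}. (D j has_real_derivative D (Suc j) x) (at x within {-1..1})"
    and "continuous_on {-1..1} (D (2 * n))"
    and "\<forall>x \<in> {-1..1}. z (- x) = z x"
    and "\<forall>x \<in> {-1..1}. Lop p n \<Lambda> D x = 0"
    and "\<forall>j < n. D j (-1) = 0 \<and> D j 1 = 0"
  shows "\<exists>c. (\<forall>x \<in> {-1..1}. Lop p (n - 1) \<Lambda> D x = c) \<and> (c = 0 \<longrightarrow> (\<forall>x \<in> {-1..1}. z x = 0))"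
proof -
  obtain m where n: "n = Suc m" using assms(2) by (cases n) auto
  have mp: "p \<le> m" using assms(2) n by simp
  have H: "\<forall>j < 2 * n. \<forall>x \<in> {-1..1}. (D j has_real_derivative D (Suc j) x) (at x within {-1..1})"
    using assms(4) .
  have C: "\<forall>j\<le>2 * n. continuous_on {-1..1} (D j)"
  proof (intro allI impI)
    fix j assume j: "j \<le> 2 * n"
    show "continuous_on {-1..1} (D j)"
    proof (cases "j = 2 * n")
      case True then show ?thesis using assms(5) by simp
    next
      case False then have jj: "j < 2 * n" using j by simp
      show ?thesis by (rule DERIV_continuous_on[where D="\<lambda>x. D (Suc j) x"]) (use H jj in auto)
    qed
  qed
  have B: "\<forall>j < n. D j (-1) = 0 \<and> D j 1 = 0" using assms(8) .
  have par: "\<forall>x\<in>{-1..1}. D j (-x) = (-1)^j * D j x" if "j \<le> 2 * n" for j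
    by (rule parity[OF H _ that]) (use assms(3,6) in auto)
  define Ef where "Ef x = (-1)^m * D (Suc (2*m)) x - \<Lambda> * (-1)^(m-p) * D (Suc (2*m - 2*p)) x" for x
  have LE: "\<forall>x\<in>{-1..1}. ((Lop p m \<Lambda> D) has_real_derivative Ef x) (at x within {-1..1})"
  proof
    fix x :: real assume x: "x \<in> {-1..1}"
    have d1: "(D (2*m) has_real_derivative D (Suc (2*m)) x) (at x within {-1..1})" using H x n by auto
    have d2: "(D (2*m-2*p) has_real_derivative D (Suc (2*m-2*p)) x) (at x within {-1..1})" using H x n by auto
    show "((Lop p m \<Lambda> D) has_real_derivative Ef x) (at x within {-1..1})"
      unfolding Lop_def[abs_def] Ef_def using d1 d2 by (auto intro!: derivative_eq_intros)
  qed
  have EE: "\<forall>x\<in>{-1..1}. (Ef has_real_derivative 0) (at x within {-1..1})"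
  proof
    fix x :: real assume x: "x \<in> {-1..1}"
    have d1: "(D (Suc (2*m)) has_real_derivative D (Suc (Suc (2*m))) x) (at x within {-1..1})" using H x n by auto
    have d2: "(D (Suc (2*m-2*p)) has_real_derivative D (Suc (Suc (2*m-2*p))) x) (at x within {-1..1})"
      using H x n mp by auto
    have "(Ef has_real_derivative ((-1)^m * D (Suc (Suc (2*m))) x - \<Lambda> * (-1)^(m-p) * D (Suc (Suc (2*m-2*p))) x)) (at x within {-1..1})"
      unfolding Ef_def[abs_def] using d1 d2 by (auto intro!: derivative_eq_intros)
    moreover have "(-1)^m * D (Suc (Suc (2*m))) x - \<Lambda> * (-1)^(m-p) * D (Suc (Suc (2*m-2*p))) x = - Lop p n \<Lambda> D x"
    proof -
      have a1: "n - p = Suc (m - p)" using n mp by simp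
      have a2: "2 * n - 2 * p = Suc (Suc (2*m-2*p))" using n mp by simp
      have a3: "2 * n = Suc (Suc (2*m))" using n by simp
      have pn: "(-1::real)^n = -((-1)^m)" using n by simp
      have pnp: "(-1::real)^(n-p) = -((-1)^(m-p))" using a1 by simp
      have a4: "Suc (Suc (2*m)) - 2 * p = Suc (Suc (2*m-2*p))" using mp by simp
      show ?thesis unfolding Lop_def a3 pn pnp a4 by simp
    qed
    ultimately show "(Ef has_real_derivative 0) (at x within {-1..1})" using assms(7) x by simp
  qed
  obtain e where e: "\<forall>x\<in>{-1..1}. Ef x = e"
    using has_field_derivative_zero_constant[of "{-1..1::real}" Ef] EE by auto
  have "Ef 0 = 0"
  proof -
    have "Suc (2*m) \<le> 2*n" "Suc (2*m-2*p) \<le> 2*n" using n by auto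
    then have q1: "\<forall>x\<in>{-1..1}. D (Suc (2*m)) (-x) = - D (Suc (2*m)) x"
      and q2: "\<forall>x\<in>{-1..1}. D (Suc (2*m-2*p)) (-x) = - D (Suc (2*m-2*p)) x"
      using par[of "Suc (2*m)"] par[of "Suc (2*m-2*p)"] by auto
    have "D (Suc (2*m)) 0 = 0" using q1[rule_format, of 0] by simp
    moreover have "D (Suc (2*m-2*p)) 0 = 0" using q2[rule_format, of 0] by simp
    ultimately show ?thesis by (simp add: Ef_def)
  qed
  then have e0: "\<forall>x\<in>{-1..1}. Ef x = 0" using e by force
  obtain c where c: "\<forall>x\<in>{-1..1}. Lop p m \<Lambda> D x = c"
    using has_field_derivative_zero_constant[of "{-1..1::real}" "Lop p m \<Lambda> D"] LE e0 by force
  show ?thesis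
  proof (intro exI conjI impI)
    show "\<forall>x\<in>{-1..1}. Lop p (n - 1) \<Lambda> D x = c" using c n by simp
  next
    assume c0: "c = 0"
    define A where "A k = integral {-1..1} (\<lambda>x. D k x * D k x)" for k
    have en: "integral {-1..1} (\<lambda>x. D 0 x * D (2 * k) x) = (-1)^k * A k" if "k \<le> m" for k
      unfolding A_def by (rule energy[OF H C B]) (use that n in auto)
    have po: "integral {-1..1} (\<lambda>x. x * D 1 x * D (2 * k) x) = (-1)^k * (real k - 1/2) * A k" if "k \<le> m" for k
      unfolding A_def by (rule pohozaev[OF H C B]) (use that n in auto)
    have ode: "(-1)^m * D (2*m) x = \<Lambda> * (-1)^(m-p) * D (2*(m-p)) x" if "x \<in> {-1..1}" for x
      using c that c0 unfolding Lop_def by (simp add: diff_mult_distrib2)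
    have cm: "continuous_on {-1..1} (D (2*m))" "continuous_on {-1..1} (D (2*(m-p)))"
      "continuous_on {-1..1} (D 0)" "continuous_on {-1..1} (D 1)" using C n by auto
    have s1: "(-1)^m * integral {-1..1} (\<lambda>x. D 0 x * D (2*m) x) = \<Lambda> * (-1)^(m-p) * integral {-1..1} (\<lambda>x. D 0 x * D (2*(m-p)) x)"
    proof -
      have "(-1)^m * integral {-1..1} (\<lambda>x. D 0 x * D (2*m) x) = integral {-1..1} (\<lambda>x. D 0 x * ((-1)^m * D (2*m) x))"
        by (subst integral_mult_right[symmetric]) (rule integral_cong, simp add: mult_ac)
      also have "\<dots> = integral {-1..1} (\<lambda>x. D 0 x * (\<Lambda> * (-1)^(m-p) * D (2*(m-p)) x))"
        by (rule integral_cong) (simp add: ode)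
      also have "\<dots> = \<Lambda> * (-1)^(m-p) * integral {-1..1} (\<lambda>x. D 0 x * D (2*(m-p)) x)"
        by (subst integral_mult_right[symmetric]) (rule integral_cong, simp add: mult_ac)
      finally show ?thesis .
    qed
    have s2: "(-1)^m * integral {-1..1} (\<lambda>x. x * D 1 x * D (2*m) x) = \<Lambda> * (-1)^(m-p) * integral {-1..1} (\<lambda>x. x * D 1 x * D (2*(m-p)) x)"
    proof -
      have "(-1)^m * integral {-1..1} (\<lambda>x. x * D 1 x * D (2*m) x) = integral {-1..1} (\<lambda>x. x * D 1 x * ((-1)^m * D (2*m) x))"
        by (subst integral_mult_right[symmetric]) (rule integral_cong, simp add: mult_ac)
      also have "\<dots> = integral {-1..1} (\<lambda>x. x * D 1 x * (\<Lambda> * (-1)^(m-p) * D (2*(m-p)) x))"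
        by (rule integral_cong) (simp add: ode)
      also have "\<dots> = \<Lambda> * (-1)^(m-p) * integral {-1..1} (\<lambda>x. x * D 1 x * D (2*(m-p)) x)"
        by (subst integral_mult_right[symmetric]) (rule integral_cong, simp add: mult_ac)
      finally show ?thesis .
    qed
    have sq: "((-1::real)^k) * (-1)^k = 1" for k :: nat
      by (simp add: power_add[symmetric])
    have r1: "A m = \<Lambda> * A (m-p)"
      using s1 en[of m] en[of "m-p"] by (simp add: mult.assoc[symmetric] sq; simp add: algebra_simps sq)
    have r2: "(real m - 1/2) * A m = \<Lambda> * ((real (m-p) - 1/2) * A (m-p))"
      using s2 po[of m] po[of "m-p"] by (simp add: mult.assoc[symmetric] sq; simp add: algebra_simps sq)
    have "real (m-p) = real m - real p" using mp by simp
    then have "real p * (\<Lambda> * A (m-p)) = 0" using r1 r2 by (simp add: algebra_simps)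
    then have "\<Lambda> * A (m-p) = 0" using assms(1) by simp
    then have Am: "A m = 0" using r1 by simp
    have cdm: "continuous_on {-1..1} (D m)" using C n by auto
    have Dm0: "\<forall>x\<in>{-1..1}. D m x = 0"
    proof
      fix x :: real assume x: "x \<in> {-1..1}"
      have c2: "continuous_on (cbox (-1) 1) (\<lambda>x. D m x * D m x)"
        using cdm by (auto intro!: continuous_intros)
      have "(\<lambda>x. D m x * D m x) integrable_on {-1..1}"
        by (rule integrable_continuous_real) (use cdm in \<open>auto intro!: continuous_intros\<close>)
      then have "((\<lambda>x. D m x * D m x) has_integral A m) {-1..1}"
        unfolding A_def by (rule integrable_integral)
      then have i2: "((\<lambda>x. D m x * D m x) has_integral 0) (cbox (-1) 1)"
        using Am by simp
      have "D m x * D m x = 0"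
        using has_integral_0_cbox_imp_0[OF c2 _ i2, of x] x by auto
      then show "D m x = 0" by simp
    qed
    have down: "\<forall>x\<in>{-1..1}. D (m - i) x = 0" if "i \<le> m" for i
      using that
    proof (induction i)
      case 0 then show ?case using Dm0 by simp
    next
      case (Suc i)
      then have IH: "\<forall>x\<in>{-1..1}. D (Suc (m - Suc i)) x = 0"
        by (simp add: Suc_diff_Suc)
      have "\<forall>x\<in>{-1..1}. (D (m - Suc i) has_real_derivative 0) (at x within {-1..1})"
      proof
        fix x :: real assume x: "x \<in> {-1..1}"
        have lt: "m - Suc i < 2 * n" using n by simp
        have "(D (m - Suc i) has_real_derivative D (Suc (m - Suc i)) x) (at x within {-1..1})"
          using H lt x by blast
        then show "(D (m - Suc i) has_real_derivative 0) (at x within {-1..1})" using IH x by simp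
      qed
      then obtain k where k: "\<forall>x\<in>{-1..1}. D (m - Suc i) x = k"
        using has_field_derivative_zero_constant[of "{-1..1::real}" "D (m - Suc i)"] by auto
      have "D (m - Suc i) 1 = 0" using B n by auto
      then show ?case using k by force
    qed
    show "\<forall>x\<in>{-1..1}. z x = 0" using down[of m] assms(3) by simp
  qed
qed

end
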